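(* Let $\Gamma$ be a group and $S$ a $\Gamma$-graded inverse semigroup. Then $S$ is $0$-$E$-unitary if and only if the inverse semigroup $S_\varepsilon$ is $0$-$E$-unitary.
   Context: Semigroups have a zero; $S$ is $\Gamma$-graded via $\deg:S\setminus\{0\}\to\Gamma$ with $\deg(st)=\deg(s)\deg(t)$ whenever $st\neq0$; $S_\alpha=\deg^{-1}(\alpha)\cup\{0\}$; $\varepsilon$ is the identity of $\Gamma$. $E(S)$ is the set of idempotents. The natural partial order on an inverse semigroup: $s\le t$ iff $s=tu$ for some $u\in E(S)$. An inverse semigroup $S$ with zero is $0$-$E$-unitary if for all $s\in S$ and $u\in E(S)\setminus\{0\}$ with $u\le s$, one has $s\in E(S)$. *)

theory Defs
  imports "HOL-Algebra.Group"
begin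

definition semigroup_on :: "'a set \<Rightarrow> ('a \<Rightarrow> 'a \<Rightarrow> 'a) \<Rightarrow> bool" where
  "semigroup_on S m \<longleftrightarrow> (\<forall>x\<in>S. \<forall>y\<in>S. m x y \<in> S) \<and>
     (\<forall>x\<in>S. \<forall>y\<in>S. \<forall>w\<in>S. m (m x y) w = m x (m y w))"

definition has_zero :: "'a set \<Rightarrow> ('a \<Rightarrow> 'a \<Rightarrow> 'a) \<Rightarrow> 'a \<Rightarrow> bool" where
  "has_zero S m z \<longleftrightarrow> z \<in> S \<and> (\<forall>x\<in>S. m z x = z \<and> m x z = z)"

definition idems :: "'a set \<Rightarrow> ('a \<Rightarrow> 'a \<Rightarrow> 'a) \<Rightarrow> 'a set" where
  "idems S m = {e\<in>S. m e e = e}"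

definition inverse_semigroup_on :: "'a set \<Rightarrow> ('a \<Rightarrow> 'a \<Rightarrow> 'a) \<Rightarrow> bool" where
  "inverse_semigroup_on S m \<longleftrightarrow> semigroup_on S m \<and>
     (\<forall>s\<in>S. \<exists>!t. t \<in> S \<and> m (m s t) s = s \<and> m (m t s) t = t)"

definition nat_le :: "'a set \<Rightarrow> ('a \<Rightarrow> 'a \<Rightarrow> 'a) \<Rightarrow> 'a \<Rightarrow> 'a \<Rightarrow> bool" where
  "nat_le S m s t \<longleftrightarrow> (\<exists>u\<in>idems S m. s = m t u)"

definition zero_E_unitary :: "'a set \<Rightarrow> ('a \<Rightarrow> 'a \<Rightarrow> 'a) \<Rightarrow> 'a \<Rightarrow> bool" where
  "zero_E_unitary S m z \<longleftrightarrow>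
     (\<forall>s\<in>S. \<forall>u\<in>idems S m - {z}. nat_le S m u s \<longrightarrow> s \<in> idems S m)"

definition graded :: "('g, 'b) monoid_scheme \<Rightarrow> 'a set \<Rightarrow> ('a \<Rightarrow> 'a \<Rightarrow> 'a) \<Rightarrow> 'a \<Rightarrow> ('a \<Rightarrow> 'g) \<Rightarrow> bool" where
  "graded G S m z deg \<longleftrightarrow> (\<forall>s\<in>S - {z}. deg s \<in> carrier G) \<and>
     (\<forall>s\<in>S - {z}. \<forall>t\<in>S - {z}. m s t \<noteq> z \<longrightarrow> deg (m s t) = deg s \<otimes>\<^bsub>G\<^esub> deg t)"

definition homog :: "'a set \<Rightarrow> 'a \<Rightarrow> ('a \<Rightarrow> 'g) \<Rightarrow> 'g \<Rightarrow> 'a set" where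
  "homog S z deg \<alpha> = {s \<in> S - {z}. deg s = \<alpha>} \<union> {z}"

end

theory Submission
  imports Defs
begin

lemma idem_deg:
  assumes "group G" "graded G S m z deg" "e \<in> idems S m" "e \<noteq> z"
  shows "deg e = \<one>\<^bsub>G\<^esub>"
proof -
  have eS: "e \<in> S" and ee: "m e e = e" using assms(3) by (auto simp: idems_def)
  have c: "deg e \<in> carrier G" using assms(2,4) eS by (auto simp: graded_def)
  have "deg e = deg e \<otimes>\<^bsub>G\<^esub> deg e" using assms(2,4) eS ee unfolding graded_def by (metis DiffI singletonD)
  then show ?thesis using c assms(1) using group.l_cancel_one' by metis
qed

lemma idems_eq:
  assumes "group G" "graded G S m z deg" "has_zero S m z"
  shows "idems (homog S z deg \<one>\<^bsub>G\<^esub>) m = idems S m"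
proof
  show "idems (homog S z deg \<one>\<^bsub>G\<^esub>) m \<subseteq> idems S m"
    using assms(3) by (auto simp: idems_def homog_def has_zero_def)
  show "idems S m \<subseteq> idems (homog S z deg \<one>\<^bsub>G\<^esub>) m"
  proof
    fix e assume e: "e \<in> idems S m"
    show "e \<in> idems (homog S z deg \<one>\<^bsub>G\<^esub>) m"
    proof (cases "e = z")
      case True then show ?thesis using e by (auto simp: idems_def homog_def)
    next
      case False then show ?thesis using e idem_deg[OF assms(1,2) e]
        by (auto simp: idems_def homog_def)
    qed
  qed
qed

theorem proposition2p6:
  fixes G :: "('g, 'b) monoid_scheme" and S :: "'a set" and m :: "'a \<Rightarrow> 'a \<Rightarrow> 'a"
    and z :: 'a and deg :: "'a \<Rightarrow> 'g"
  assumes "group G"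
    and "inverse_semigroup_on S m"
    and "has_zero S m z"
    and "graded G S m z deg"
  shows "zero_E_unitary S m z \<longleftrightarrow> zero_E_unitary (homog S z deg \<one>\<^bsub>G\<^esub>) m z"
proof -
  let ?T = "homog S z deg \<one>\<^bsub>G\<^esub>"
  have I: "idems ?T m = idems S m" by (rule idems_eq[OF assms(1,4,3)])
  have N: "nat_le ?T m u s = nat_le S m u s" for u s by (simp add: nat_le_def I)
  have TS: "?T \<subseteq> S" using assms(3) by (auto simp: homog_def has_zero_def)
  show ?thesis
  proof
    assume H: "zero_E_unitary S m z"
    show "zero_E_unitary ?T m z"
      unfolding zero_E_unitary_def I N using H TS by (auto simp: zero_E_unitary_def)
  next
    assume H: "zero_E_unitary ?T m z"
    show "zero_E_unitary S m z"
      unfolding zero_E_unitary_def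
    proof (intro ballI impI)
      fix s u assume s: "s \<in> S" and u: "u \<in> idems S m - {z}" and le: "nat_le S m u s"
      then obtain v where v: "v \<in> idems S m" and uv: "u = m s v" by (auto simp: nat_le_def)
      have vS: "v \<in> S" using v by (auto simp: idems_def)
      have uz: "u \<noteq> z" using u by auto
      have sz: "s \<noteq> z" using uz uv vS assms(3) by (auto simp: has_zero_def)
      have vz: "v \<noteq> z" using uz uv s assms(3) by (auto simp: has_zero_def)
      have du: "deg u = \<one>\<^bsub>G\<^esub>" using idem_deg[OF assms(1,4)] u by auto
      have dv: "deg v = \<one>\<^bsub>G\<^esub>" using idem_deg[OF assms(1,4) v vz] .
      have "deg u = deg s \<otimes>\<^bsub>G\<^esub> deg v" using assms(4) s vS sz vz uz uv
        unfolding graded_def by auto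
      moreover have "deg s \<in> carrier G" using assms(4) s sz by (auto simp: graded_def)
      ultimately have ds: "deg s = \<one>\<^bsub>G\<^esub>" using du dv assms(1)
        by (simp add: group.is_monoid monoid.r_one)
      have sT: "s \<in> ?T" using s sz ds by (auto simp: homog_def)
      have "s \<in> idems ?T m" using H sT u le unfolding zero_E_unitary_def I N by blast
      then show "s \<in> idems S m" using I by simp
    qed
  qed
qed

end
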